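(* Let $0 < \gamma \le 1/2$, let $(x,z)$ be an optimal extreme point solution of LP-CVRP-MD, let $\delta$ be defined by $\sum_{r \in R}\sum_{v \in C} 2\,c(v,r)\,z^r_{v,v} = (1-\delta)\,\mathrm{opt}_{LP}$, and let $\mathcal P$ be the random collection of paths produced by the sampling procedure described in the context. Then $\mathbb E\left[\sum_{P \in \mathcal P} c(P)\right] \le \gamma\,(1+\delta)\,\mathrm{opt}_{LP}$.
   Context: Problem: nonempty disjoint finite sets $C$ (clients) and $R$ (depots), $V = C\cup R$, a metric $c$ on $V$, integer capacity $k \ge 3$; it is assumed $c(v,R) := \min_{r\in R} c(v,r) > 0$ for every client $v$. Work in the complete bidirected graph on $V$ (directed edges $(a,b)$ of cost $c(a,b)$); for a vector $y$ on directed edges and $S\subseteq V$, $y(\delta^{in}(S))$, $y(\delta^{out}(S))$ are sums over edges entering/leaving $S$. LP-CVRP-MD has variables $x^r_{v,e}\ge 0$ ($r\in R$, $v\in C$, $e$ a directed edge) and $z^r_{v,u}\ge0$ ($r\in R$, $v\in C$, $u\in V$), objective: minimize $\sum_{r,v,e} c(e)x^r_{v,e}$, constraints: (1) $x^r_v(\delta^{out}(u))$ is $2z^r_{v,v}$ if $u=r$, $0$ if $u=v$, $z^r_{v,u}$ otherwise; (2) $x^r_v(\delta^{in}(u))$ is $0$ if $u=r$, $2z^r_{v,v}$ if $u=v$, $z^r_{v,u}$ otherwise (for all $r\in R,v\in C,u\in V$); (3) $x^r_v(\delta^{in}(S))\ge z^r_{v,u}$ whenever $u\in S\subseteq V\setminus\{r\}$;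 (4) $\sum_{r\in R}\sum_{v\in C} z^r_{v,u}=1$ for all $u\in C$; (5) $z^r_{v,u}\le z^r_{v,v}$ for $u,v\in C$; (6) $z^r_{v,u}=0$ if $u,v\in C$ and $c(u,r)>c(v,r)$; (7) $\sum_{u\in C}z^r_{v,u}\le k z^r_{v,v}$. $\mathrm{opt}_{LP}$ is its optimum value. An $r$-branching is a tree rooted at $r$ oriented away from $r$ (not necessarily spanning). Sampling procedure: for each $r\in R$, $v\in C$, take $r$-branchings $B_1,B_2,\dots$ (finitely many) with weights $\mu_i\ge 0$, $\sum_i\mu_i = K_{r,v} := 2\gamma z^r_{v,v}$, such that every directed edge $e$ lies in branchings of total weight at most $\gamma x^r_{v,e}$, $v$ lies on every $B_i$, and every client $u\ne v$ lies in branchings of total weight at least $\gamma z^r_{v,u}$ (such a decomposition exists by a theorem of Bang-Jensen, Frank and Jackson applied to the preflow $\gamma x^r_v$). Independently include each $B_i$ with probability $\mu_i$. For each included branching $B$, form an $r$–$v$ path $P(B)$ by adding the reverse of every edge of $B$ not on the $r$–$v$ path of $B$ and shortcutting the resulting Eulerian $r$–$v$ walk past repeated vertices. Then, while some client lies on two of these paths, remove it from one of them (by shortcutting past it, or truncating the path just before it if it is the last vertex), and discard paths containing no client. $\mathcal P$ is the resulting collection of paths; $c(P)$ is the total edge cost of a path $P$. *)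

theory Defs
  imports "HOL-Probability.Probability" "HOL-Library.Sublist"
begin

definition dedges :: "'a set \<Rightarrow> ('a \<times> 'a) set" where
  "dedges V = {(a, b). a \<in> V \<and> b \<in> V \<and> a \<noteq> b}"

definition delta_in :: "'a set \<Rightarrow> (('a \<times> 'a) \<Rightarrow> real) \<Rightarrow> 'a set \<Rightarrow> real" where
  "delta_in V y S = (\<Sum>e\<in>{e \<in> dedges V. fst e \<notin> S \<and> snd e \<in> S}. y e)"

definition delta_out :: "'a set \<Rightarrow> (('a \<times> 'a) \<Rightarrow> real) \<Rightarrow> 'a set \<Rightarrow> real" where
  "delta_out V y S = (\<Sum>e\<in>{e \<in> dedges V. fst e \<in> S \<and> snd e \<notin> S}. y e)"

definition is_metric_on :: "'a set \<Rightarrow> ('a \<Rightarrow> 'a \<Rightarrow> real) \<Rightarrow> bool" where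
  "is_metric_on V c \<longleftrightarrow>
     (\<forall>a\<in>V. \<forall>b\<in>V. c a b \<ge> 0 \<and> c a b = c b a \<and> (c a b = 0 \<longleftrightarrow> a = b)) \<and>
     (\<forall>a\<in>V. \<forall>b\<in>V. \<forall>d\<in>V. c a d \<le> c a b + c b d)"

text \<open>Variables: x r v e  stands for x^r_{v,e},  z r v u  stands for z^r_{v,u}.
  Outside the index range (r in R, v in C, e a directed edge / u in V) the
  functions are required to be 0, so that the feasible region is a polyhedron
  in the finite-dimensional space of the LP variables.\<close>

definition lp_feasible ::
  "'a set \<Rightarrow> 'a set \<Rightarrow> ('a \<Rightarrow> 'a \<Rightarrow> real) \<Rightarrow> nat \<Rightarrow>
   ('a \<Rightarrow> 'a \<Rightarrow> ('a \<times> 'a) \<Rightarrow> real) \<Rightarrow> ('a \<Rightarrow> 'a \<Rightarrow> 'a \<Rightarrow> real) \<Rightarrow> bool" where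
  "lp_feasible C R c k x z \<longleftrightarrow>
     (let V = C \<union> R in
     \<comment> \<open>index range\<close>
     (\<forall>r v e. x r v e \<noteq> 0 \<longrightarrow> r \<in> R \<and> v \<in> C \<and> e \<in> dedges V) \<and>
     (\<forall>r v u. z r v u \<noteq> 0 \<longrightarrow> r \<in> R \<and> v \<in> C \<and> u \<in> V) \<and>
     \<comment> \<open>nonnegativity\<close>
     (\<forall>r v e. x r v e \<ge> 0) \<and> (\<forall>r v u. z r v u \<ge> 0) \<and>
     \<comment> \<open>(1)\<close>
     (\<forall>r\<in>R. \<forall>v\<in>C. \<forall>u\<in>V.
        delta_out V (x r v) {u} =
          (if u = r then 2 * z r v v else if u = v then 0 else z r v u)) \<and>
     \<comment> \<open>(2)\<close>
     (\<forall>r\<in>R. \<forall>v\<in>C. \<forall>u\<in>V.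
        delta_in V (x r v) {u} =
          (if u = r then 0 else if u = v then 2 * z r v v else z r v u)) \<and>
     \<comment> \<open>(3)\<close>
     (\<forall>r\<in>R. \<forall>v\<in>C. \<forall>u S. u \<in> S \<and> S \<subseteq> V - {r} \<longrightarrow>
        delta_in V (x r v) S \<ge> z r v u) \<and>
     \<comment> \<open>(4)\<close>
     (\<forall>u\<in>C. (\<Sum>r\<in>R. \<Sum>v\<in>C. z r v u) = 1) \<and>
     \<comment> \<open>(5)\<close>
     (\<forall>r\<in>R. \<forall>u\<in>C. \<forall>v\<in>C. z r v u \<le> z r v v) \<and>
     \<comment> \<open>(6)\<close>
     (\<forall>r\<in>R. \<forall>u\<in>C. \<forall>v\<in>C. c u r > c v r \<longrightarrow> z r v u = 0) \<and>
     \<comment> \<open>(7)\<close>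
     (\<forall>r\<in>R. \<forall>v\<in>C. (\<Sum>u\<in>C. z r v u) \<le> real k * z r v v))"

definition lp_obj ::
  "'a set \<Rightarrow> 'a set \<Rightarrow> ('a \<Rightarrow> 'a \<Rightarrow> real) \<Rightarrow> ('a \<Rightarrow> 'a \<Rightarrow> ('a \<times> 'a) \<Rightarrow> real) \<Rightarrow> real" where
  "lp_obj C R c x = (\<Sum>r\<in>R. \<Sum>v\<in>C. \<Sum>e\<in>dedges (C \<union> R). c (fst e) (snd e) * x r v e)"

definition lp_optimal where
  "lp_optimal C R c k x z \<longleftrightarrow> lp_feasible C R c k x z \<and>
     (\<forall>x' z'. lp_feasible C R c k x' z' \<longrightarrow> lp_obj C R c x \<le> lp_obj C R c x')"

definition opt_LP where
  "opt_LP C R c k = (INF p\<in>{(x, z). lp_feasible C R c k x z}. lp_obj C R c (fst p))"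

definition lp_extreme_point where
  "lp_extreme_point C R c k x z \<longleftrightarrow> lp_feasible C R c k x z \<and>
     \<not> (\<exists>x1 z1 x2 z2 (l::real). lp_feasible C R c k x1 z1 \<and> lp_feasible C R c k x2 z2 \<and>
          (x1, z1) \<noteq> (x2, z2) \<and> 0 < l \<and> l < 1 \<and>
          x = (\<lambda>r v e. l * x1 r v e + (1 - l) * x2 r v e) \<and>
          z = (\<lambda>r v u. l * z1 r v u + (1 - l) * z2 r v u))"

definition is_branching :: "'a set \<Rightarrow> 'a \<Rightarrow> ('a \<times> 'a) set \<Rightarrow> bool" where
  "is_branching V r B \<longleftrightarrow> r \<in> V \<and> B \<subseteq> dedges V \<and>
     (\<forall>(a, b)\<in>B. b \<noteq> r \<and> (r, b) \<in> B\<^sup>+) \<and>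
     (\<forall>b. card {a. (a, b) \<in> B} \<le> 1)"

definition bverts :: "'a \<Rightarrow> ('a \<times> 'a) set \<Rightarrow> 'a set" where
  "bverts r B = insert r (snd ` B)"

text \<open>Arcs of the r-v path inside the branching B: exactly the arcs whose head is
  an ancestor of v (or v itself).\<close>
definition path_arcs :: "('a \<times> 'a) set \<Rightarrow> 'a \<Rightarrow> ('a \<times> 'a) set" where
  "path_arcs B v = {(a, b) \<in> B. (b, v) \<in> B\<^sup>*}"

definition walk_arcs :: "'a list \<Rightarrow> ('a \<times> 'a) list" where
  "walk_arcs W = zip W (tl W)"

definition path_cost :: "('a \<Rightarrow> 'a \<Rightarrow> real) \<Rightarrow> 'a list \<Rightarrow> real" where
  "path_cost c P = (\<Sum>(a, b)\<leftarrow>walk_arcs P. c a b)"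

text \<open>P is a possible outcome of P(B): W is an Eulerian r-v walk of the multigraph
  obtained from B by adding the reverse of each arc not on the r-v path of B, and
  P is obtained from W by shortcutting past repeated vertices (a distinct
  subsequence of W visiting every vertex of W, from r to v).\<close>
definition path_of_branching :: "'a \<Rightarrow> 'a \<Rightarrow> ('a \<times> 'a) set \<Rightarrow> 'a list \<Rightarrow> bool" where
  "path_of_branching r v B P \<longleftrightarrow>
     (\<exists>W. W \<noteq> [] \<and> hd W = r \<and> last W = v \<and>
        mset (walk_arcs W) = mset_set B + mset_set (prod.swap ` (B - path_arcs B v)) \<and>
        subseq P W \<and> distinct P \<and> set P = set W \<and> P \<noteq> [] \<and> hd P = r \<and> last P = v)"

definition cleanup_step :: "'a set \<Rightarrow> 'a list multiset \<Rightarrow> 'a list multiset \<Rightarrow> bool" where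
  "cleanup_step C M M' \<longleftrightarrow>
     (\<exists>P Q u. P \<in># M \<and> Q \<in># M - {#P#} \<and> u \<in> C \<and> u \<in> set P \<and> u \<in> set Q \<and>
        M' = M - {#P#} + {#removeAll u P#})"

definition cleanup_final :: "'a set \<Rightarrow> 'a list multiset \<Rightarrow> bool" where
  "cleanup_final C M \<longleftrightarrow>
     \<not> (\<exists>P Q u. P \<in># M \<and> Q \<in># M - {#P#} \<and> u \<in> C \<and> u \<in> set P \<and> u \<in> set Q)"

text \<open>Possible results of the sampling procedure for the outcome omega (omega i says
  whether branching i was included).\<close>
definition sampling_result ::
  "'a set \<Rightarrow> 'i set \<Rightarrow> ('i \<Rightarrow> 'a) \<Rightarrow> ('i \<Rightarrow> 'a) \<Rightarrow> ('i \<Rightarrow> ('a \<times> 'a) set) \<Rightarrow>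
   ('i \<Rightarrow> bool) \<Rightarrow> 'a list multiset \<Rightarrow> bool" where
  "sampling_result C Idx rt tgt br \<omega> \<P> \<longleftrightarrow>
     (\<exists>pth M. (\<forall>i\<in>Idx. \<omega> i \<longrightarrow> path_of_branching (rt i) (tgt i) (br i) (pth i)) \<and>
        (cleanup_step C)\<^sup>*\<^sup>* (image_mset pth (mset_set {i \<in> Idx. \<omega> i})) M \<and>
        cleanup_final C M \<and>
        \<P> = filter_mset (\<lambda>P. set P \<inter> C \<noteq> {}) M)"

text \<open>The branching decomposition used by the sampling procedure: finitely many
  branchings indexed by Idx; branching i belongs to the pair (rt i, tgt i).\<close>
definition valid_decomposition ::
  "'a set \<Rightarrow> 'a set \<Rightarrow> real \<Rightarrow> ('a \<Rightarrow> 'a \<Rightarrow> ('a \<times> 'a) \<Rightarrow> real) \<Rightarrow> ('a \<Rightarrow> 'a \<Rightarrow> 'a \<Rightarrow> real) \<Rightarrow>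
   'i set \<Rightarrow> ('i \<Rightarrow> 'a) \<Rightarrow> ('i \<Rightarrow> 'a) \<Rightarrow> ('i \<Rightarrow> ('a \<times> 'a) set) \<Rightarrow> ('i \<Rightarrow> real) \<Rightarrow> bool" where
  "valid_decomposition C R \<gamma> x z Idx rt tgt br \<mu> \<longleftrightarrow>
     finite Idx \<and>
     (\<forall>i\<in>Idx. rt i \<in> R \<and> tgt i \<in> C \<and> is_branching (C \<union> R) (rt i) (br i) \<and>
        \<mu> i \<ge> 0 \<and> tgt i \<in> bverts (rt i) (br i)) \<and>
     (\<forall>r\<in>R. \<forall>v\<in>C.
        (\<Sum>i\<in>{i\<in>Idx. rt i = r \<and> tgt i = v}. \<mu> i) = 2 * \<gamma> * z r v v \<and>
        (\<forall>e\<in>dedges (C \<union> R).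
           (\<Sum>i\<in>{i\<in>Idx. rt i = r \<and> tgt i = v \<and> e \<in> br i}. \<mu> i) \<le> \<gamma> * x r v e) \<and>
        (\<forall>u\<in>C - {v}.
           (\<Sum>i\<in>{i\<in>Idx. rt i = r \<and> tgt i = v \<and> u \<in> bverts r (br i)}. \<mu> i) \<ge> \<gamma> * z r v u))"

definition sampling_distribution :: "'i set \<Rightarrow> ('i \<Rightarrow> real) \<Rightarrow> ('i \<Rightarrow> bool) pmf" where
  "sampling_distribution Idx \<mu> = Pi_pmf Idx False (\<lambda>i. bernoulli_pmf (\<mu> i))"

end

theory Submission
  imports Defs "HOL-Library.Transitive_Closure_Table"
begin

lemma pc_nil[simp]: "path_cost c [] = 0"
  by (simp add: path_cost_def walk_arcs_def)
lemma pc_single[simp]: "path_cost c [a] = 0"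
  by (simp add: path_cost_def walk_arcs_def)
lemma pc_cons2[simp]: "path_cost c (a # b # P) = c a b + path_cost c (b # P)"
  by (simp add: path_cost_def walk_arcs_def)

lemma metricD:
  assumes "is_metric_on V c" "a \<in> V" "b \<in> V"
  shows "c a b \<ge> 0" "c a b = c b a" "c a a = 0"
  using assms unfolding is_metric_on_def by auto

lemma metric_tri:
  assumes "is_metric_on V c" "a \<in> V" "b \<in> V" "d \<in> V"
  shows "c a d \<le> c a b + c b d"
  using assms unfolding is_metric_on_def by auto

lemma subseq_cost_aux:
  assumes m: "is_metric_on V c" and s: "subseq Q P"
  shows "set P \<subseteq> V \<Longrightarrow> path_cost c Q \<le> path_cost c P \<and> (\<forall>x\<in>V. path_cost c (x#Q) \<le> path_cost c (x#P))"
  using s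
proof (induction Q P rule: list_emb.induct)
  case (list_emb_Nil ys)
  have "0 \<le> path_cost c ys \<and> (\<forall>x\<in>V. 0 \<le> path_cost c (x#ys))"
    using list_emb_Nil
  proof (induction ys)
    case Nil then show ?case by simp
  next
    case (Cons a ys)
    then show ?case
      by (cases ys) (auto intro!: add_nonneg_nonneg metricD(1)[OF m])
  qed
  then show ?case by simp
next
  case (list_emb_Cons xs ys y)
  then have IH: "path_cost c xs \<le> path_cost c ys" "\<forall>x\<in>V. path_cost c (x#xs) \<le> path_cost c (x#ys)"
    and yV: "y \<in> V" by auto
  have 1: "path_cost c ys \<le> path_cost c (y#ys)"
    using list_emb_Cons.prems yV by (cases ys) (auto intro!: metricD(1)[OF m])
  have 2: "path_cost c (x#ys) \<le> path_cost c (x#y#ys)" if "x \<in> V" for x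
    using list_emb_Cons.prems yV that
    by (cases ys) (auto intro!: metricD(1)[OF m] simp: add.assoc[symmetric] intro!: add_right_mono metric_tri[OF m])
  show ?case using IH 1 2 by force
next
  case (list_emb_Cons2 x y xs ys)
  then have "x = y" by simp
  with list_emb_Cons2 have IH: "\<forall>z\<in>V. path_cost c (z#xs) \<le> path_cost c (z#ys)" and xV: "x \<in> V" by auto
  show ?case using IH xV \<open>x = y\<close> by simp
qed

lemma subseq_cost:
  assumes "is_metric_on V c" "subseq Q P" "set P \<subseteq> V"
  shows "path_cost c Q \<le> path_cost c P"
  using subseq_cost_aux[OF assms(1,2)] assms(3) by blast

lemma cost_nonneg:
  assumes "is_metric_on V c" "set P \<subseteq> V"
  shows "0 \<le> path_cost c P"
  using subseq_cost[OF assms(1) _ assms(2), of "[]"] by simp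


lemma dedges_swap: "e \<in> dedges V \<Longrightarrow> prod.swap e \<in> dedges V"
  by (auto simp: dedges_def)

lemma chain_cost:
  assumes m: "is_metric_on V c" and BV: "B \<subseteq> dedges V"
    and p: "rtrancl_path (\<lambda>a b. (a, b) \<in> B) x xs z" and zV: "z \<in> V"
  shows "c x z \<le> (\<Sum>e\<leftarrow>zip (x#xs) xs. c (fst e) (snd e)) \<and>
         set (zip (x#xs) xs) \<subseteq> {(a, b). (a, b) \<in> B \<and> (b, z) \<in> B\<^sup>*}"
  using p zV
proof (induction rule: rtrancl_path.induct)
  case (base x)
  then show ?case using metricD(3)[OF m] by simp
next
  case (step x y ys z)
  have xyV: "x \<in> V" "y \<in> V" using step.hyps(1) BV by (auto simp: dedges_def)
  have yz: "(y, z) \<in> B\<^sup>*"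
  proof -
    have "(\<lambda>a b. (a, b) \<in> B)\<^sup>*\<^sup>* y z" using step.hyps(2) rtranclp_eq_rtrancl_path by fast
    then show ?thesis by (simp add: rtranclp_rtrancl_eq)
  qed
  note IH = step.IH[OF step.prems]
  have "c x z \<le> c x y + c y z" using metric_tri[OF m xyV step.prems] .
  also have "\<dots> \<le> c x y + (\<Sum>e\<leftarrow>zip (y#ys) ys. c (fst e) (snd e))" using IH by simp
  finally show ?case using IH step.hyps(1) yz by (cases ys) auto
qed

lemma branching_path_cost:
  assumes m: "is_metric_on V c" and fin: "finite V" and br: "is_branching V r B"
    and v: "v \<in> bverts r B" "v \<noteq> r" "v \<in> V"
  shows "c r v \<le> (\<Sum>e\<in>path_arcs B v. c (fst e) (snd e))"
proof -
  have BV: "B \<subseteq> dedges V" using br by (simp add: is_branching_def)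
  obtain a where "(a, v) \<in> B" using v by (auto simp: bverts_def)
  then have "(r, v) \<in> B\<^sup>+" using br unfolding is_branching_def by blast
  then have "(\<lambda>a b. (a, b) \<in> B)\<^sup>*\<^sup>* r v"
    by (simp add: rtranclp_rtrancl_eq trancl_into_rtrancl)
  then obtain xs where "rtrancl_path (\<lambda>a b. (a, b) \<in> B) r xs v"
    by (auto simp: rtranclp_eq_rtrancl_path)
  then obtain ys where p: "rtrancl_path (\<lambda>a b. (a, b) \<in> B) r ys v" and d: "distinct (r # ys)"
    by (rule rtrancl_path_distinct)
  note cc = chain_cost[OF m BV p v(3)]
  have dz: "distinct (zip (r#ys) ys)" using d by (rule distinct_zipI1)
  have sub: "set (zip (r#ys) ys) \<subseteq> path_arcs B v"
    using cc by (auto simp: path_arcs_def)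
  have finPA: "finite (path_arcs B v)"
    using BV fin finite_subset[of "path_arcs B v" "dedges V"]
    by (auto simp: path_arcs_def dedges_def intro: finite_subset[of _ "V \<times> V"])
  have "c r v \<le> (\<Sum>e\<leftarrow>zip (r#ys) ys. c (fst e) (snd e))" using cc by blast
  also have "\<dots> = (\<Sum>e\<in>set (zip (r#ys) ys). c (fst e) (snd e))"
    using dz by (simp add: sum_list_distinct_conv_sum_set)
  also have "\<dots> \<le> (\<Sum>e\<in>path_arcs B v. c (fst e) (snd e))"
    apply (rule sum_mono2[OF finPA sub])
    using BV by (auto simp: path_arcs_def dedges_def intro!: metricD(1)[OF m])
  finally show ?thesis .
qed


lemma walk_verts:
  assumes "W \<noteq> []"
  shows "set W \<subseteq> insert (hd W) (snd ` set (walk_arcs W))"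
proof -
  obtain a W' where W: "W = a # W'" using assms by (cases W) auto
  have "map snd (zip (a#W') W') = W'" by (simp add: map_snd_zip_take)
  then have "set W' = snd ` set (zip (a#W') W')" by (metis list.set_map)
  then show ?thesis by (auto simp: W walk_arcs_def)
qed

lemma path_cost_mset: "path_cost c W = (\<Sum>e\<in>#mset (walk_arcs W). c (fst e) (snd e))"
  unfolding path_cost_def by (simp add: split_def sum_mset_sum_list[symmetric])

lemma pob_cost:
  assumes m: "is_metric_on V c" and fin: "finite V" and br: "is_branching V r B"
    and v: "v \<in> bverts r B" "v \<noteq> r" "v \<in> V"
    and pob: "path_of_branching r v B P"
  shows "set P \<subseteq> V \<and> path_cost c P \<le> 2 * (\<Sum>e\<in>B. c (fst e) (snd e)) - c r v"
proof -
  define f where "f = (\<lambda>e. c (fst e) (snd e))"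
  have BV: "B \<subseteq> dedges V" and rV: "r \<in> V" using br by (auto simp: is_branching_def)
  have finD: "finite (dedges V)"
    using fin by (auto simp: dedges_def intro: finite_subset[of _ "V \<times> V"])
  have finB: "finite B" using BV finD finite_subset by blast
  obtain W where W: "W \<noteq> []" "hd W = r" "last W = v"
    and ms: "mset (walk_arcs W) = mset_set B + mset_set (prod.swap ` (B - path_arcs B v))"
    and sP: "subseq P W" "set P = set W"
    using pob unfolding path_of_branching_def by blast
  have "set (walk_arcs W) = B \<union> prod.swap ` (B - path_arcs B v)"
    using arg_cong[OF ms, of set_mset] finB by simp
  also have "\<dots> \<subseteq> dedges V" using BV dedges_swap by blast
  finally have "snd ` set (walk_arcs W) \<subseteq> V" by (auto simp: dedges_def)
  then have WV: "set W \<subseteq> V" using walk_verts[OF W(1)] W(2) rV by blast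
  have PA: "path_arcs B v \<subseteq> B" by (auto simp: path_arcs_def)
  have "path_cost c W = (\<Sum>e\<in>#mset (walk_arcs W). f e)"
    unfolding f_def by (rule path_cost_mset)
  also have "\<dots> = sum f B + sum f (prod.swap ` (B - path_arcs B v))"
    unfolding ms by (simp add: sum_unfold_sum_mset)
  also have "sum f (prod.swap ` (B - path_arcs B v)) = sum (f \<circ> prod.swap) (B - path_arcs B v)"
    by (rule sum.reindex) (auto simp: inj_on_def)
  also have "\<dots> = sum f (B - path_arcs B v)"
    apply (rule sum.cong[OF refl])
    using BV metricD(2)[OF m] by (auto simp: f_def dedges_def)
  also have "\<dots> = sum f B - sum f (path_arcs B v)"
    using finB PA by (simp add: sum_diff)
  finally have cW: "path_cost c W = 2 * sum f B - sum f (path_arcs B v)" by simp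
  have "c r v \<le> sum f (path_arcs B v)"
    unfolding f_def by (rule branching_path_cost[OF m fin br v])
  moreover have "path_cost c P \<le> path_cost c W" by (rule subseq_cost[OF m sP(1) WV])
  ultimately show ?thesis using cW WV sP(2) by (simp add: f_def)
qed


lemma cleanup_cost:
  assumes m: "is_metric_on V c" and st: "(cleanup_step C)\<^sup>*\<^sup>* M M'"
  shows "(\<forall>P\<in>#M. set P \<subseteq> V) \<Longrightarrow>
    (\<forall>P\<in>#M'. set P \<subseteq> V) \<and> (\<Sum>P\<in>#M'. path_cost c P) \<le> (\<Sum>P\<in>#M. path_cost c P)"
  using st
proof (induction rule: rtranclp_induct)
  case base
  then show ?case by simp
next
  case (step M1 M2)
  from step.IH[OF step.prems] have IH: "\<forall>P\<in>#M1. set P \<subseteq> V"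
    "(\<Sum>P\<in>#M1. path_cost c P) \<le> (\<Sum>P\<in>#M. path_cost c P)" by auto
  obtain P u where P: "P \<in># M1" and M2: "M2 = M1 - {#P#} + {#removeAll u P#}"
    using step.hyps(2) unfolding cleanup_step_def by blast
  have PV: "set P \<subseteq> V" using IH(1) P by blast
  have sub: "subseq (removeAll u P) P" by (simp add: removeAll_filter_not_eq)
  have M1: "M1 = add_mset P (M1 - {#P#})" using P by simp
  have "(\<Sum>P\<in>#M1. path_cost c P) = path_cost c P + (\<Sum>P\<in>#M1 - {#P#}. path_cost c P)"
    by (subst M1) simp
  moreover have "(\<Sum>P\<in>#M2. path_cost c P) = path_cost c (removeAll u P) + (\<Sum>P\<in>#M1 - {#P#}. path_cost c P)"
    unfolding M2 by simp
  moreover have "path_cost c (removeAll u P) \<le> path_cost c P" by (rule subseq_cost[OF m sub PV])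
  moreover have "\<forall>Q\<in>#M2. set Q \<subseteq> V" using IH(1) PV unfolding M2 by (auto dest: in_diffD)
  ultimately show ?case using IH(2) by auto
qed

lemma sum_mset_nonneg_real:
  "(\<And>x. x \<in># M \<Longrightarrow> 0 \<le> (f x :: real)) \<Longrightarrow> 0 \<le> (\<Sum>x\<in>#M. f x)"
  by (induction M) auto

lemma sample_bound:
  assumes m: "is_metric_on (C \<union> R) c" and finV: "finite (C \<union> R)" and CR: "C \<inter> R = {}"
    and vd: "valid_decomposition C R \<gamma> x z Idx rt tgt br \<mu>"
    and sr: "sampling_result C Idx rt tgt br \<omega> Pm"
  shows "(\<Sum>P\<in>#Pm. path_cost c P) \<le>
    (\<Sum>i\<in>Idx. if \<omega> i then 2 * (\<Sum>e\<in>br i. c (fst e) (snd e)) - c (rt i) (tgt i) else 0)"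
proof -
  define V where "V = C \<union> R"
  define G where "G = (\<lambda>i. 2 * (\<Sum>e\<in>br i. c (fst e) (snd e)) - c (rt i) (tgt i))"
  define S where "S = {i \<in> Idx. \<omega> i}"
  have finI: "finite Idx" using vd by (simp add: valid_decomposition_def)
  have vdI: "\<forall>i\<in>Idx. rt i \<in> R \<and> tgt i \<in> C \<and> is_branching (C \<union> R) (rt i) (br i) \<and>
        \<mu> i \<ge> 0 \<and> tgt i \<in> bverts (rt i) (br i)"
    using vd unfolding valid_decomposition_def by blast
  have finS: "finite S" using finI by (simp add: S_def)
  obtain pth M where pth: "\<forall>i\<in>Idx. \<omega> i \<longrightarrow> path_of_branching (rt i) (tgt i) (br i) (pth i)"
    and cl: "(cleanup_step C)\<^sup>*\<^sup>* (image_mset pth (mset_set S)) M"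
    and Pm: "Pm = filter_mset (\<lambda>P. set P \<inter> C \<noteq> {}) M"
    using sr unfolding sampling_result_def S_def by blast
  have each: "set (pth i) \<subseteq> V \<and> path_cost c (pth i) \<le> G i" if "i \<in> S" for i
  proof -
    have i: "i \<in> Idx" "\<omega> i" using that by (auto simp: S_def)
    have props: "rt i \<in> R" "tgt i \<in> C" "is_branching V (rt i) (br i)" "tgt i \<in> bverts (rt i) (br i)"
      using vdI i(1) unfolding V_def by auto
    have "tgt i \<noteq> rt i" using props(1,2) CR by (metis IntI empty_iff)
    moreover have "tgt i \<in> V" using props(2) by (simp add: V_def)
    ultimately show ?thesis
      using pob_cost[OF m[folded V_def] finV[folded V_def] props(3) props(4)] pth i
      by (simp add: G_def)
  qed
  have M0V: "\<forall>P\<in>#image_mset pth (mset_set S). set P \<subseteq> V"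
    using each finS by (simp add: S_def)
  note cc = cleanup_cost[OF m[folded V_def] cl M0V]
  have "(\<Sum>P\<in>#Pm. path_cost c P) \<le> (\<Sum>P\<in>#M. path_cost c P)"
  proof -
    have "M = filter_mset (\<lambda>P. set P \<inter> C \<noteq> {}) M + filter_mset (\<lambda>P. \<not> (set P \<inter> C \<noteq> {})) M"
      by (rule multiset_partition)
    then have "(\<Sum>P\<in>#M. path_cost c P) = (\<Sum>P\<in>#Pm. path_cost c P) +
       (\<Sum>P\<in>#filter_mset (\<lambda>P. \<not> (set P \<inter> C \<noteq> {})) M. path_cost c P)"
      unfolding Pm by (metis image_mset_union sum_mset.union)
    moreover have "0 \<le> (\<Sum>P\<in>#filter_mset (\<lambda>P. \<not> (set P \<inter> C \<noteq> {})) M. path_cost c P)"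
      using cc cost_nonneg[OF m[folded V_def]] by (intro sum_mset_nonneg_real) auto
    ultimately show ?thesis by simp
  qed
  also have "\<dots> \<le> (\<Sum>P\<in>#image_mset pth (mset_set S). path_cost c P)" using cc by blast
  also have "\<dots> = (\<Sum>i\<in>S. path_cost c (pth i))"
    by (simp add: sum_unfold_sum_mset image_mset.compositionality comp_def)
  also have "\<dots> \<le> (\<Sum>i\<in>S. G i)" using each by (intro sum_mono) auto
  also have "\<dots> = (\<Sum>i\<in>Idx. if \<omega> i then G i else 0)"
    unfolding S_def using finI by (simp add: sum.inter_filter)
  finally show ?thesis unfolding G_def .
qed


lemma bern_ind:
  assumes "0 \<le> a" "0 \<le> p"
  shows "measure_pmf.expectation (bernoulli_pmf p) (\<lambda>b. if b then a else 0) \<le> p * a"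
proof -
  have "measure_pmf.expectation (bernoulli_pmf p) (\<lambda>b. if b then a else 0) = pmf (bernoulli_pmf p) True * a"
    by (subst integral_measure_pmf[of "{True}"]) (auto split: if_splits)
  also have "\<dots> \<le> p * a"
  proof (cases "p \<le> 1")
    case True then show ?thesis using assms by simp
  next
    case False
    then have "pmf (bernoulli_pmf p) True \<le> p" using pmf_le_1[of "bernoulli_pmf p" True] by linarith
    then show ?thesis using assms by (simp add: mult_right_mono)
  qed
  finally show ?thesis .
qed

lemma sd_finite:
  assumes "finite Idx"
  shows "finite (set_pmf (sampling_distribution Idx \<mu>))"
proof -
  have "set_pmf (sampling_distribution Idx \<mu>) \<subseteq> {f. \<forall>x. x \<notin> Idx \<longrightarrow> f x = False}"
    unfolding sampling_distribution_def by (rule set_Pi_pmf_subset[OF assms])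
  also have "\<dots> \<subseteq> (\<lambda>S x. x \<in> S) ` Pow Idx"
  proof
    fix f :: "'a \<Rightarrow> bool" assume f: "f \<in> {f. \<forall>x. x \<notin> Idx \<longrightarrow> f x = False}"
    have "f = (\<lambda>x. x \<in> {y. f y})" by simp
    moreover have "{y. f y} \<in> Pow Idx" using f by auto
    ultimately show "f \<in> (\<lambda>S x. x \<in> S) ` Pow Idx" by blast
  qed
  finally show ?thesis using assms by (meson finite_Pow_iff finite_imageI finite_subset)
qed

lemma sd_ind:
  assumes "finite Idx" "i \<in> Idx" "0 \<le> a" "0 \<le> \<mu> i"
  shows "measure_pmf.expectation (sampling_distribution Idx \<mu>) (\<lambda>\<omega>. if \<omega> i then a else 0) \<le> \<mu> i * a"
proof -
  have "measure_pmf.expectation (sampling_distribution Idx \<mu>) (\<lambda>\<omega>. if \<omega> i then a else 0)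
      = measure_pmf.expectation (map_pmf (\<lambda>f. f i) (sampling_distribution Idx \<mu>)) (\<lambda>b. if b then a else 0)"
    by simp
  also have "map_pmf (\<lambda>f. f i) (sampling_distribution Idx \<mu>) = bernoulli_pmf (\<mu> i)"
    unfolding sampling_distribution_def using Pi_pmf_component[OF assms(1), of i False "\<lambda>i. bernoulli_pmf (\<mu> i)"] assms(2) by simp
  finally show ?thesis using bern_ind[OF assms(3,4)] by simp
qed

lemma group_rv:
  assumes "finite Idx" "finite R" "finite C" "\<forall>i\<in>Idx. rt i \<in> R \<and> tgt i \<in> C"
  shows "(\<Sum>i\<in>Idx. f i) = (\<Sum>r\<in>R. \<Sum>v\<in>C. \<Sum>i\<in>{i\<in>Idx. rt i = r \<and> tgt i = v}. f i)"
proof -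
  have "(\<Sum>i\<in>Idx. f i) = (\<Sum>y\<in>R \<times> C. \<Sum>i\<in>{i. i \<in> Idx \<and> (rt i, tgt i) = y}. f i)"
    by (rule sum.group[symmetric]) (use assms in auto)
  also have "\<dots> = (\<Sum>r\<in>R. \<Sum>v\<in>C. \<Sum>i\<in>{i. i \<in> Idx \<and> (rt i, tgt i) = (r, v)}. f i)"
    by (simp add: sum.cartesian_product case_prod_unfold prod_eq_iff)
  finally show ?thesis by simp
qed

theorem lemma3:
  fixes C R :: "'a set" and c :: "'a \<Rightarrow> 'a \<Rightarrow> real" and k :: nat
    and x :: "'a \<Rightarrow> 'a \<Rightarrow> ('a \<times> 'a) \<Rightarrow> real" and z :: "'a \<Rightarrow> 'a \<Rightarrow> 'a \<Rightarrow> real"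
    and \<gamma> \<delta> :: real
    and Idx :: "'i set" and rt tgt :: "'i \<Rightarrow> 'a" and br :: "'i \<Rightarrow> ('a \<times> 'a) set"
    and \<mu> :: "'i \<Rightarrow> real"
    and res :: "('i \<Rightarrow> bool) \<Rightarrow> 'a list multiset"
  assumes "finite C" "finite R" "C \<noteq> {}" "R \<noteq> {}" "C \<inter> R = {}"
    and "is_metric_on (C \<union> R) c"
    and "k \<ge> 3"
    and "\<forall>v\<in>C. (MIN r\<in>R. c v r) > 0"
    and "0 < \<gamma>" "\<gamma> \<le> 1 / 2"
    and "lp_optimal C R c k x z"
    and "lp_extreme_point C R c k x z"
    and "(\<Sum>r\<in>R. \<Sum>v\<in>C. 2 * c v r * z r v v) = (1 - \<delta>) * opt_LP C R c k"
    and "valid_decomposition C R \<gamma> x z Idx rt tgt br \<mu>"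
    and "\<forall>\<omega>\<in>set_pmf (sampling_distribution Idx \<mu>).
           sampling_result C Idx rt tgt br \<omega> (res \<omega>)"
  shows "measure_pmf.expectation (sampling_distribution Idx \<mu>)
           (\<lambda>\<omega>. \<Sum>P\<in>#res \<omega>. path_cost c P)
         \<le> \<gamma> * (1 + \<delta>) * opt_LP C R c k"
proof -
  define V where "V = C \<union> R"
  define ce where "ce = (\<lambda>e. c (fst e) (snd e))"
  define G where "G = (\<lambda>i. 2 * (\<Sum>e\<in>br i. c (fst e) (snd e)) - c (rt i) (tgt i))"
  define \<Omega> where "\<Omega> = sampling_distribution Idx \<mu>"
  define I where "I = (\<lambda>r v. {i\<in>Idx. rt i = r \<and> tgt i = v})"
  have m: "is_metric_on V c" using assms(6) by (simp add: V_def)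
  have finV: "finite V" using assms(1,2) by (simp add: V_def)
  have finD: "finite (dedges V)"
    using finV by (auto simp: dedges_def intro: finite_subset[of _ "V \<times> V"])
  have vd: "valid_decomposition C R \<gamma> x z Idx rt tgt br \<mu>" by fact
  have finI: "finite Idx" using vd by (simp add: valid_decomposition_def)
  have vdI: "\<forall>i\<in>Idx. rt i \<in> R \<and> tgt i \<in> C \<and> is_branching V (rt i) (br i) \<and>
        \<mu> i \<ge> 0 \<and> tgt i \<in> bverts (rt i) (br i)"
    using vd unfolding valid_decomposition_def V_def by blast
  have vdS: "\<forall>r\<in>R. \<forall>v\<in>C. (\<Sum>i\<in>I r v. \<mu> i) = 2 * \<gamma> * z r v v \<and>
        (\<forall>e\<in>dedges V. (\<Sum>i\<in>{i\<in>Idx. rt i = r \<and> tgt i = v \<and> e \<in> br i}. \<mu> i) \<le> \<gamma> * x r v e)"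
    using vd unfolding valid_decomposition_def V_def I_def by blast
  have rtgt: "\<forall>i\<in>Idx. rt i \<in> R \<and> tgt i \<in> C" using vdI by blast
  have ceD: "0 \<le> ce e" if "e \<in> dedges V" for e
    using that metricD(1)[OF m] by (auto simp: ce_def dedges_def)
  have brD: "br i \<subseteq> dedges V" if "i \<in> Idx" for i
    using vdI that by (auto simp: is_branching_def)
  have Gnn: "0 \<le> G i" if i: "i \<in> Idx" for i
  proof -
    have props: "rt i \<in> R" "tgt i \<in> C" "is_branching V (rt i) (br i)" "tgt i \<in> bverts (rt i) (br i)"
      using vdI i by auto
    have ne: "tgt i \<noteq> rt i" using props(1,2) assms(5) by (metis IntI empty_iff)
    have tV: "tgt i \<in> V" "rt i \<in> V" using props(1,2) by (auto simp: V_def)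
    have "c (rt i) (tgt i) \<le> (\<Sum>e\<in>path_arcs (br i) (tgt i). ce e)"
      unfolding ce_def by (rule branching_path_cost[OF m finV props(3) props(4) ne tV(1)])
    also have "\<dots> \<le> (\<Sum>e\<in>br i. ce e)"
      apply (rule sum_mono2)
      using finite_subset[OF brD[OF i] finD] brD[OF i] ceD by (auto simp: path_arcs_def)
    finally have "c (rt i) (tgt i) \<le> (\<Sum>e\<in>br i. ce e)" .
    moreover have "0 \<le> c (rt i) (tgt i)" using metricD(1)[OF m tV(2,1)] .
    ultimately show ?thesis by (simp add: G_def ce_def)
  qed
  have finO: "finite (set_pmf \<Omega>)" unfolding \<Omega>_def by (rule sd_finite[OF finI])
  have "measure_pmf.expectation \<Omega> (\<lambda>\<omega>. \<Sum>P\<in>#res \<omega>. path_cost c P)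
      \<le> measure_pmf.expectation \<Omega> (\<lambda>\<omega>. \<Sum>i\<in>Idx. if \<omega> i then G i else 0)"
  proof (rule integral_mono_AE)
    show "integrable (measure_pmf \<Omega>) (\<lambda>\<omega>. \<Sum>P\<in>#res \<omega>. path_cost c P)"
      by (rule integrable_measure_pmf_finite[OF finO])
    show "integrable (measure_pmf \<Omega>) (\<lambda>\<omega>. \<Sum>i\<in>Idx. if \<omega> i then G i else 0)"
      by (rule integrable_measure_pmf_finite[OF finO])
    show "AE \<omega> in measure_pmf \<Omega>. (\<Sum>P\<in>#res \<omega>. path_cost c P) \<le> (\<Sum>i\<in>Idx. if \<omega> i then G i else 0)"
    proof (rule AE_pmfI)
      fix \<omega> assume "\<omega> \<in> set_pmf \<Omega>"
      then have "sampling_result C Idx rt tgt br \<omega> (res \<omega>)" using assms(15) by (simp add: \<Omega>_def)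
      from sample_bound[OF assms(6) finV[unfolded V_def] assms(5) vd this]
      show "(\<Sum>P\<in>#res \<omega>. path_cost c P) \<le> (\<Sum>i\<in>Idx. if \<omega> i then G i else 0)"
        unfolding G_def .
    qed
  qed
  also have "\<dots> = (\<Sum>i\<in>Idx. measure_pmf.expectation \<Omega> (\<lambda>\<omega>. if \<omega> i then G i else 0))"
    by (rule Bochner_Integration.integral_sum[where f="\<lambda>i \<omega>. if \<omega> i then G i else 0"]) (rule integrable_measure_pmf_finite[OF finO])
  also have "\<dots> \<le> (\<Sum>i\<in>Idx. \<mu> i * G i)"
    apply (rule sum_mono)
    unfolding \<Omega>_def using sd_ind[OF finI] Gnn vdI by blast
  also have "\<dots> = 2 * (\<Sum>i\<in>Idx. \<mu> i * (\<Sum>e\<in>br i. ce e)) - (\<Sum>i\<in>Idx. \<mu> i * c (rt i) (tgt i))"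
    by (simp add: G_def ce_def algebra_simps sum_subtractf sum_distrib_left)
  finally have E: "measure_pmf.expectation \<Omega> (\<lambda>\<omega>. \<Sum>P\<in>#res \<omega>. path_cost c P)
     \<le> 2 * (\<Sum>i\<in>Idx. \<mu> i * (\<Sum>e\<in>br i. ce e)) - (\<Sum>i\<in>Idx. \<mu> i * c (rt i) (tgt i))" .
  have obj: "lp_obj C R c x = opt_LP C R c k"
    unfolding opt_LP_def
  proof (rule cInf_eq_minimum[symmetric])
    show "lp_obj C R c x \<in> (\<lambda>p. lp_obj C R c (fst p)) ` {(x, z). lp_feasible C R c k x z}"
      using assms(11) unfolding lp_optimal_def by (intro image_eqI[of _ _ "(x, z)"]) auto
    show "lp_obj C R c x \<le> y" if "y \<in> (\<lambda>p. lp_obj C R c (fst p)) ` {(x, z). lp_feasible C R c k x z}" for y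
      using that assms(11) unfolding lp_optimal_def by auto
  qed
  have A: "(\<Sum>i\<in>Idx. \<mu> i * (\<Sum>e\<in>br i. ce e)) \<le> \<gamma> * lp_obj C R c x"
  proof -
    have "(\<Sum>i\<in>Idx. \<mu> i * (\<Sum>e\<in>br i. ce e)) = (\<Sum>i\<in>Idx. \<Sum>e\<in>dedges V. if e \<in> br i then \<mu> i * ce e else 0)"
    proof (rule sum.cong[OF refl])
      fix i assume i: "i \<in> Idx"
      have "(\<Sum>e\<in>dedges V. if e \<in> br i then \<mu> i * ce e else 0) = (\<Sum>e\<in>{e\<in>dedges V. e \<in> br i}. \<mu> i * ce e)"
        using finD by (simp add: sum.inter_filter)
      also have "{e\<in>dedges V. e \<in> br i} = br i" using brD[OF i] by blast
      finally show "\<mu> i * (\<Sum>e\<in>br i. ce e) = (\<Sum>e\<in>dedges V. if e \<in> br i then \<mu> i * ce e else 0)"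
        by (simp add: sum_distrib_left)
    qed
    also have "\<dots> = (\<Sum>r\<in>R. \<Sum>v\<in>C. \<Sum>i\<in>I r v. \<Sum>e\<in>dedges V. if e \<in> br i then \<mu> i * ce e else 0)"
      unfolding I_def by (rule group_rv[OF finI assms(2,1) rtgt])
    also have "\<dots> \<le> (\<Sum>r\<in>R. \<Sum>v\<in>C. \<Sum>e\<in>dedges V. \<gamma> * (ce e * x r v e))"
    proof (intro sum_mono)
      fix r v assume rv: "r \<in> R" "v \<in> C"
      have finIrv: "finite (I r v)" using finI by (simp add: I_def)
      have "(\<Sum>i\<in>I r v. \<Sum>e\<in>dedges V. if e \<in> br i then \<mu> i * ce e else 0)
          = (\<Sum>e\<in>dedges V. \<Sum>i\<in>I r v. if e \<in> br i then \<mu> i * ce e else 0)"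
        by (rule sum.swap)
      also have "\<dots> \<le> (\<Sum>e\<in>dedges V. \<gamma> * (ce e * x r v e))"
      proof (rule sum_mono)
        fix e assume e: "e \<in> dedges V"
        have "(\<Sum>i\<in>I r v. if e \<in> br i then \<mu> i * ce e else 0) = (\<Sum>i\<in>{i\<in>I r v. e \<in> br i}. \<mu> i * ce e)"
          using finIrv by (simp add: sum.inter_filter)
        also have "\<dots> = ce e * (\<Sum>i\<in>{i\<in>Idx. rt i = r \<and> tgt i = v \<and> e \<in> br i}. \<mu> i)"
          by (simp add: sum_distrib_left I_def mult.commute conj_assoc)
        also have "\<dots> \<le> ce e * (\<gamma> * x r v e)"
          using vdS rv e ceD[OF e] by (intro mult_left_mono) auto
        finally show "(\<Sum>i\<in>I r v. if e \<in> br i then \<mu> i * ce e else 0) \<le> \<gamma> * (ce e * x r v e)"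
          by (simp add: algebra_simps)
      qed
      finally show "(\<Sum>i\<in>I r v. \<Sum>e\<in>dedges V. if e \<in> br i then \<mu> i * ce e else 0)
          \<le> (\<Sum>e\<in>dedges V. \<gamma> * (ce e * x r v e))" .
    qed
    also have "\<dots> = \<gamma> * lp_obj C R c x"
      by (simp add: lp_obj_def sum_distrib_left ce_def V_def)
    finally show ?thesis .
  qed
  have B: "(\<Sum>i\<in>Idx. \<mu> i * c (rt i) (tgt i)) = \<gamma> * ((1 - \<delta>) * opt_LP C R c k)"
  proof -
    have "(\<Sum>i\<in>Idx. \<mu> i * c (rt i) (tgt i)) = (\<Sum>r\<in>R. \<Sum>v\<in>C. \<Sum>i\<in>I r v. \<mu> i * c (rt i) (tgt i))"
      unfolding I_def by (rule group_rv[OF finI assms(2,1) rtgt])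
    also have "\<dots> = (\<Sum>r\<in>R. \<Sum>v\<in>C. \<gamma> * (2 * c v r * z r v v))"
    proof (intro sum.cong[OF refl])
      fix r v assume rv: "r \<in> R" "v \<in> C"
      have "(\<Sum>i\<in>I r v. \<mu> i * c (rt i) (tgt i)) = (\<Sum>i\<in>I r v. \<mu> i) * c r v"
        by (simp add: I_def sum_distrib_right)
      also have "\<dots> = 2 * \<gamma> * z r v v * c v r"
        using vdS rv metricD(2)[OF m, of r v] by (simp add: V_def)
      finally show "(\<Sum>i\<in>I r v. \<mu> i * c (rt i) (tgt i)) = \<gamma> * (2 * c v r * z r v v)"
        by (simp add: algebra_simps)
    qed
    also have "\<dots> = \<gamma> * (\<Sum>r\<in>R. \<Sum>v\<in>C. 2 * c v r * z r v v)"
      by (simp add: sum_distrib_left)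
    also have "\<dots> = \<gamma> * ((1 - \<delta>) * opt_LP C R c k)" using assms(13) by simp
    finally show ?thesis .
  qed
  have "2 * (\<Sum>i\<in>Idx. \<mu> i * (\<Sum>e\<in>br i. ce e)) - (\<Sum>i\<in>Idx. \<mu> i * c (rt i) (tgt i))
      \<le> 2 * (\<gamma> * opt_LP C R c k) - \<gamma> * ((1 - \<delta>) * opt_LP C R c k)"
    using A B obj by simp
  also have "\<dots> = \<gamma> * (1 + \<delta>) * opt_LP C R c k" by (simp add: algebra_simps)
  finally show ?thesis using E by (simp add: \<Omega>_def)
qed

end
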